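(* Let $\eta(v,w)=v^0w^0-v^1w^1-\dots-v^nw^n$ on $\mathbb{R}^{n+1}$ and let $h$ be a symmetric bilinear form on $\mathbb{R}^{n+1}$ of Lorentzian signature $(+,-,\dots,-)$. Let $C_h$ be one of the two connected components of $\{v: h(v,v)>0\}$ and set $$\mathcal{T}=\{v\in\mathbb{R}^{n+1}: \eta(v,v)>0,\ v^0>0\}\cap C_h,$$ assumed nonempty. Define $F:\mathcal{T}\to(0,\infty)$ by $F(v)=[\eta(v,v)\,h(v,v)]^{1/4}$. Then for all $v,w\in\mathcal{T}$, $$\frac12\left(\frac{\eta(w,v)}{\eta(v,v)}+\frac{h(w,v)}{h(v,v)}\right)\ge\frac{F(w)}{F(v)}.$$ *)

theory Defs
  imports "HOL-Analysis.Analysis"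
begin

text \<open>Minkowski form on R^(n+1), realised as real^'n with a distinguished
  time index t0 (so n+1 = CARD('n)):
  eta v w = v_t0 w_t0 - sum over the other coordinates.\<close>
definition minkowski :: "'n::finite \<Rightarrow> real^'n \<Rightarrow> real^'n \<Rightarrow> real" where
  "minkowski t0 v w = v$t0 * w$t0 - (\<Sum>i\<in>UNIV - {t0}. v$i * w$i)"

text \<open>A symmetric bilinear form has Lorentzian signature (+,-,...,-) iff it is
  congruent to the Minkowski form, i.e. diagonal diag(1,-1,...,-1) in some basis.\<close>
definition lorentzian_form :: "'n::finite \<Rightarrow> (real^'n \<Rightarrow> real^'n \<Rightarrow> real) \<Rightarrow> bool" where
  "lorentzian_form t0 h \<longleftrightarrow> bilinear h \<and> (\<forall>v w. h v w = h w v) \<and>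
     (\<exists>A::real^'n^'n. invertible A \<and> (\<forall>v w. h v w = minkowski t0 (A *v v) (A *v w)))"

end

theory Submission imports Defs begin

lemma alg: fixes a b c d S :: real
  assumes "b \<ge> 0" "d \<ge> 0" "a > b" "c > d" "S \<le> b*d"
  shows "a*c - S \<ge> sqrt ((a^2 - b^2)*(c^2-d^2))"
proof -
  have "b*d \<le> a*c" using assms by (simp add: mult_mono)
  hence h0: "a*c - b*d \<ge> 0" by simp
  have "(a^2 - b^2)*(c^2-d^2) \<le> (a*c-b*d)^2"
  proof -
    have "(a*c-b*d)^2 - (a^2 - b^2)*(c^2-d^2) = (a*d-b*c)^2" by algebra
    thus ?thesis by (metis diff_ge_0_iff_ge zero_le_power2)
  qed
  hence "sqrt ((a^2 - b^2)*(c^2-d^2)) \<le> a*c - b*d"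
    using h0 real_le_lsqrt real_sqrt_le_mono by (metis real_sqrt_abs abs_of_nonneg)
  thus ?thesis using assms by linarith
qed

lemma rcs:
  fixes x y :: "real^'n"
  assumes "minkowski t0 x x > 0" "minkowski t0 y y > 0" "x$t0 > 0" "y$t0 > 0"
  shows "minkowski t0 x y \<ge> sqrt (minkowski t0 x x * minkowski t0 y y)"
proof -
  define I where "I = UNIV - {t0}"
  define P where "P = (\<Sum>i\<in>I. (x$i)^2)"
  define Q where "Q = (\<Sum>i\<in>I. (y$i)^2)"
  define S where "S = (\<Sum>i\<in>I. x$i * y$i)"
  have P0: "P \<ge> 0" "Q \<ge> 0" unfolding P_def Q_def by (auto intro: sum_nonneg)
  have CS: "S^2 \<le> P*Q" unfolding S_def P_def Q_def by (rule Cauchy_Schwarz_ineq_sum)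
  have "S \<le> sqrt P * sqrt Q"
  proof -
    have "S \<le> \<bar>S\<bar>" by simp
    also have "\<bar>S\<bar> = sqrt (S^2)" by simp
    also have "\<dots> \<le> sqrt (P*Q)" using CS by (rule real_sqrt_le_mono)
    finally show ?thesis by (simp add: real_sqrt_mult)
  qed
  have ex: "minkowski t0 x x = (x$t0)^2 - (sqrt P)^2" using P0
    by (simp add: minkowski_def P_def I_def power2_eq_square)
  have ey: "minkowski t0 y y = (y$t0)^2 - (sqrt Q)^2" using P0
    by (simp add: minkowski_def Q_def I_def power2_eq_square)
  have exy: "minkowski t0 x y = x$t0 * y$t0 - S" by (simp add: minkowski_def S_def I_def)
  have "sqrt P < x$t0"
    using assms ex P0 by (metis diff_gt_0_iff_gt power_less_imp_less_base less_eq_real_def)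
  moreover have "sqrt Q < y$t0"
    using assms ey P0 by (metis diff_gt_0_iff_gt power_less_imp_less_base less_eq_real_def)
  ultimately show ?thesis unfolding ex ey exy
    by (intro alg) (use P0 \<open>S \<le> _\<close> in auto)
qed

lemma time_nz:
  fixes x :: "real^'n"
  assumes "minkowski t0 x x > 0" shows "x$t0 \<noteq> 0"
proof
  assume "x$t0 = 0"
  hence "minkowski t0 x x = - (\<Sum>i\<in>UNIV - {t0}. (x$i)^2)" by (simp add: minkowski_def power2_eq_square)
  also have "\<dots> \<le> 0" by (simp add: sum_nonneg)
  finally show False using assms by simp
qed

lemma mink_neg: "minkowski t0 (-x) (-y) = minkowski t0 x y"
  by (simp add: minkowski_def)

lemma mink_sym: "minkowski t0 x y = minkowski t0 y x"
  by (simp add: minkowski_def mult.commute)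


lemma q4: "(z::real) > 0 \<Longrightarrow> z powr (1/4) = sqrt (sqrt z)"
  by (simp add: powr_half_sqrt[symmetric] powr_powr)

lemma final_ineq:
  fixes p q r s a c :: real
  assumes "p > 0" "q > 0" "r > 0" "s > 0" "a \<ge> sqrt (p * q)" "c \<ge> sqrt (r * s)"
  shows "(1/2) * (a/p + c/r) \<ge> (q * s) powr (1/4) / (p * r) powr (1/4)"
proof -
  define X where "X = sqrt (q/p)"
  define Y where "Y = sqrt (s/r)"
  have "sqrt (p * q) / p = X" unfolding X_def using assms
    by (simp add: real_sqrt_mult real_sqrt_divide field_simps)
  hence hX: "a/p \<ge> X" using assms by (metis divide_right_mono less_eq_real_def)
  have "sqrt (r * s) / r = Y" unfolding Y_def using assms
    by (simp add: real_sqrt_mult real_sqrt_divide field_simps)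
  hence hY: "c/r \<ge> Y" using assms by (metis divide_right_mono less_eq_real_def)
  have X0: "X \<ge> 0" "Y \<ge> 0" unfolding X_def Y_def using assms by auto
  have am: "sqrt (X * Y) \<le> (X+Y)/2" using X0 by (rule arith_geo_mean_sqrt)
  have "(q * s) powr (1/4) / (p * r) powr (1/4) = ((q * s)/(p * r)) powr (1/4)"
    using assms by (simp add: powr_divide)
  also have "\<dots> = sqrt (sqrt ((q * s)/(p * r)))" using assms by (simp add: q4)
  also have "\<dots> = sqrt (X * Y)" unfolding X_def Y_def
    by (simp add: real_sqrt_mult[symmetric])
  finally have eq: "(q * s) powr (1/4) / (p * r) powr (1/4) = sqrt (X * Y)" .
  have "X + Y \<le> a/p + c/r" using hX hY by linarith
  hence "(X+Y)/2 \<le> (a/p + c/r)/2" by (rule divide_right_mono) simp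
  also have "(a/p + c/r)/2 = (1/2) * (a/p + c/r)" by simp
  finally have "(X+Y)/2 \<le> (1/2) * (a/p + c/r)" .
  thus ?thesis using am eq by linarith
qed


theorem mainTheorem9:
  fixes t0 :: "'n::finite"
    and h :: "real^'n \<Rightarrow> real^'n \<Rightarrow> real"
    and x0 v w :: "real^'n"
  assumes hL: "lorentzian_form t0 h"
    and x0: "h x0 x0 > 0"
    and Tdef: "T = {u. minkowski t0 u u > 0 \<and> u$t0 > 0} \<inter> connected_component_set {u. h u u > 0} x0"
    and Tne: "T \<noteq> {}"
    and Fdef: "F = (\<lambda>u. (minkowski t0 u u * h u u) powr (1/4))"
    and v: "v \<in> T" and w: "w \<in> T"
  shows "(1/2) * (minkowski t0 w v / minkowski t0 v v + h w v / h v v) \<ge> F w / F v"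
proof -
  obtain A :: "real^'n^'n" where hA: "\<And>x y. h x y = minkowski t0 (A *v x) (A *v y)"
    using hL unfolding lorentzian_form_def by blast
  define C where "C = connected_component_set {u. h u u > 0} x0"
  have vC: "v \<in> C" and wC: "w \<in> C" using v w Tdef C_def by auto
  have Csub: "C \<subseteq> {u. h u u > 0}" unfolding C_def by (rule connected_component_subset)
  have Ccon: "connected C" unfolding C_def by (rule connected_connected_component)
  define g where "g = (\<lambda>u. (A *v u)$t0)"
  have gcont: "continuous_on C g" unfolding g_def
    by (intro continuous_intros linear_continuous_on) (auto intro: bounded_linear_compose)
  have gnz: "g u \<noteq> 0" if "u \<in> C" for u
    using Csub that time_nz[of t0 "A *v u"] hA unfolding g_def by auto
  have sgn: "g v * g w > 0"
  proof (rule ccontr)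
    assume "\<not> g v * g w > 0"
    hence "min (g v) (g w) \<le> 0 \<and> 0 \<le> max (g v) (g w)"
      using gnz vC wC by (auto simp: zero_less_mult_iff min_def max_def)
    moreover have "connected (g ` C)" using gcont Ccon by (rule connected_continuous_image)
    ultimately have "0 \<in> g ` C" using vC wC unfolding connected_iff_interval
      by (cases "g v \<le> g w") (auto simp: min_def max_def split: if_splits)
    thus False using gnz by auto
  qed
  have hv: "h v v > 0" and hw: "h w w > 0" using vC wC Csub by auto
  have hwv: "h w v \<ge> sqrt (h v v * h w w)"
  proof (cases "g v > 0")
    case True
    hence "g w > 0" using sgn by (simp add: zero_less_mult_iff)
    thus ?thesis using rcs[of t0 "A *v v" "A *v w"] True hv hw hA mink_sym unfolding g_def by metis
  next
    case False
    hence "g v < 0" "g w < 0" using sgn gnz vC by (auto simp: zero_less_mult_iff)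
    thus ?thesis using rcs[of t0 "- (A *v v)" "- (A *v w)"] hv hw hA mink_sym mink_neg
      unfolding g_def by (metis neg_0_less_iff_less vector_uminus_component)
  qed
  have ev: "minkowski t0 v v > 0" "v$t0 > 0" and ew: "minkowski t0 w w > 0" "w$t0 > 0"
    using v w Tdef by auto
  have ewv: "minkowski t0 w v \<ge> sqrt (minkowski t0 v v * minkowski t0 w w)"
    using rcs[OF ev(1) ew(1) ev(2) ew(2)] mink_sym by metis
  have "(1/2) * (minkowski t0 w v / minkowski t0 v v + h w v / h v v)
        \<ge> (minkowski t0 w w * h w w) powr (1/4) / (minkowski t0 v v * h v v) powr (1/4)"
    by (rule final_ineq[OF ev(1) ew(1) hv hw ewv hwv])
  moreover have "(minkowski t0 w w * h w w) powr (1/4) / (minkowski t0 v v * h v v) powr (1/4)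
     = F w / F v" unfolding Fdef by simp
  ultimately show ?thesis by simp
qed

end
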